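(* Consider a run of the Exponential Averaging with Predictions algorithm with parameter $\alpha\ge1$ on an instance of Display Ads with free disposal, with a prediction that is a feasible allocation. Then $$\mathrm{PRD}\ \le\ \sum_a\left((B_a-\ell_a)\,\beta_a^{(T)}+\frac{1}{\alpha_B}\sum_{t\in \mathbf X_a\setminus \mathbf P_a}\left(w_{at}-\beta_a^{(t-1)}\right)+\sum_{t\in\mathbf P_a\cap\mathbf X_a}w_{at}\right),$$ where the outer sum ranges over all advertisers (including the dummy advertiser).
   Context: Display Ads with free disposal: there are real advertisers $a\in\{1,\dots,k\}$ with integer budgets $B_a\ge 1$, plus a dummy advertiser $a=0$ with budget at least the total number of impressions and value $0$ for every impression. Impressions $t=1,\dots,T$ arrive online; when $t$ arrives, the values $w_{at}\ge 0$ for all $a$ are revealed (with $w_{0t}=0$) and $t$ must be assigned immediately to one advertiser. A prediction is a fixed feasible allocation (each impression assigned to one advertiser, each real advertiser $a$ receiving at most $B_a$ impressions); $\mathrm{PRD}(t)$ denotes the advertiser the prediction assigns $t$ to, revealed on arrival of $t$, and $\mathrm{PRD}$ also denotes the total value of the predicted allocation. Algorithm, parameter $\alpha\ge1$: let $B:=\min_a B_a$ over real advertisers, $e_B:=(1+1/B)^B$, $\alpha_B:=B(e_B^{\alpha/B}-1)$, and for each advertiser $e_{B_a}:=(1+1/B_a)^{B_a}$. Initially each advertiser $a$ holds a multiset $S_a$ of $B_a$ zero-value impressions and $\beta_a=0$. When $t$ arrives: $a_P:=\mathrm{PRD}(t)$; $a_E$ is any maximizer of $w_{at}-\beta_a$;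 if $\alpha_B(w_{a_Pt}-\beta_{a_P})\ge w_{a_Et}-\beta_{a_E}$ then $a:=a_P$, else $a:=a_E$. Add $t$ to $S_a$, remove an element of minimum value from $S_a$, and with $w_1\le\dots\le w_{B_a}$ the values in $S_a$ set $\beta_a:=\frac{e_{B_a}^{\alpha/B_a}-1}{e_{B_a}^{\alpha}-1}\sum_{i=1}^{B_a}w_ie_{B_a}^{\alpha(B_a-i)/B_a}$. Notation: $\beta_a^{(t)}$ is the value of $\beta_a$ after processing impression $t$ ($\beta_a^{(0)}=0$); $a^{(t)}$ is the advertiser the algorithm assigns $t$ to; $\mathbf X_a:=\{t: a^{(t)}=a\}$; $\mathbf P_a:=\{t:\mathrm{PRD}(t)=a\}$; $\ell_a:=|\mathbf P_a\cap\mathbf X_a|$. *)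

theory Defs
  imports Complex_Main "HOL-Library.Multiset"
begin

text \<open>Advertisers are naturals 0..k (0 = dummy), impressions are naturals 1..T.
  Values: w a t.  State after impression t: S t a, the multiset of values held by a.\<close>

definition eB :: "nat \<Rightarrow> real" where
  "eB n = (1 + 1 / real n) ^ n"

definition beta_of :: "real \<Rightarrow> nat \<Rightarrow> real multiset \<Rightarrow> real" where
  "beta_of \<alpha> n M =
     (eB n powr (\<alpha> / real n) - 1) / (eB n powr \<alpha> - 1) *
     (\<Sum>i = 1..n. sorted_list_of_multiset M ! (i - 1) * eB n powr (\<alpha> * (real n - real i) / real n))"

definition alphaB :: "real \<Rightarrow> nat \<Rightarrow> real" where
  "alphaB \<alpha> n = real n * (eB n powr (\<alpha> / real n) - 1)"

definition add_drop_min :: "real \<Rightarrow> real multiset \<Rightarrow> real multiset" where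
  "add_drop_min v M = (let M' = add_mset v M in M' - {# Min (set_mset M') #})"

text \<open>A run of Exponential Averaging with Predictions (any tie-breaking for a_E).\<close>
definition ea_run ::
  "real \<Rightarrow> nat \<Rightarrow> nat \<Rightarrow> (nat \<Rightarrow> nat) \<Rightarrow> (nat \<Rightarrow> nat \<Rightarrow> real) \<Rightarrow> (nat \<Rightarrow> nat)
   \<Rightarrow> (nat \<Rightarrow> nat) \<Rightarrow> (nat \<Rightarrow> nat \<Rightarrow> real multiset) \<Rightarrow> bool" where
  "ea_run \<alpha> k T B w prd asg S \<longleftrightarrow>
     (\<forall>a. S 0 a = replicate_mset (B a) 0) \<and>
     (\<forall>t \<in> {1..T}.
        (\<exists>aE \<le> k.
           (\<forall>a \<le> k. w a t - beta_of \<alpha> (B a) (S (t - 1) a)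
                      \<le> w aE t - beta_of \<alpha> (B aE) (S (t - 1) aE)) \<and>
           asg t = (if alphaB \<alpha> (Min (B ` {1..k})) *
                        (w (prd t) t - beta_of \<alpha> (B (prd t)) (S (t - 1) (prd t)))
                      \<ge> w aE t - beta_of \<alpha> (B aE) (S (t - 1) aE)
                    then prd t else aE)) \<and>
        (\<forall>a. S t a = (if a = asg t then add_drop_min (w a t) (S (t - 1) a) else S (t - 1) a)))"

end

theory Submission
  imports Defs
begin

lemma len_sl: "length (sorted_list_of_multiset M) = size M"
  by (metis mset_sorted_list_of_multiset size_mset)

lemma insort_dom:
  fixes L0 :: "real list"
  shows "sorted L0 \<Longrightarrow> \<forall>y\<in>set L0. m \<le> y \<Longrightarrow> m \<le> v \<Longrightarrow> i < Suc (length L0)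
   \<Longrightarrow> (m # L0) ! i \<le> (insort v L0) ! i"
proof (induction L0 arbitrary: m i)
  case Nil then show ?case by simp
next
  case (Cons x xs)
  show ?case
  proof (cases "v \<le> x")
    case True then show ?thesis using Cons.prems by (cases i) auto
  next
    case False
    then have ins: "insort v (x # xs) = x # insort v xs" by simp
    show ?thesis
    proof (cases i)
      case 0 then show ?thesis using Cons.prems ins by auto
    next
      case (Suc j)
      have "(x # xs) ! j \<le> insort v xs ! j"
        using Cons.IH[of x j] Cons.prems False Suc by auto
      then show ?thesis using ins Suc by simp
    qed
  qed
qed

lemma adm_dom:
  fixes M :: "real multiset"
  assumes "i < size M"
  shows "sorted_list_of_multiset M ! i \<le> sorted_list_of_multiset (add_drop_min v M) ! i"
proof -
  let ?m = "Min (set_mset (add_mset v M))"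
  show ?thesis
  proof (cases "v \<le> Min (set_mset M)")
    case True
    have "?m = v" using True assms
      by (metis Min_insert2 Min_le finite_set_mset order_trans set_mset_add_mset_insert)
    then have "add_drop_min v M = M" by (simp add: add_drop_min_def)
    then show ?thesis by simp
  next
    case False
    have ne: "M \<noteq> {#}" using assms by auto
    define m where "m = Min (set_mset M)"
    have mM: "m \<in># M" using ne m_def by simp
    have mle: "\<forall>y\<in>#M. m \<le> y" using m_def by simp
    have "?m = min v m" using ne m_def by (simp add: Min_insert)
    then have "?m = m" using False m_def by simp
    then have eq: "add_drop_min v M = add_mset v (M - {#m#})"
      using mM False m_def by (simp add: add_drop_min_def)
    define L0 where "L0 = sorted_list_of_multiset (M - {#m#})"
    have "M = add_mset m (M - {#m#})" using mM by simp
    then have "sorted_list_of_multiset M = insort m L0"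
      unfolding L0_def by (metis sorted_list_of_multiset_insert)
    also have "\<dots> = m # L0"
      by (rule insort_is_Cons) (use mle in \<open>auto simp: L0_def dest: in_diffD\<close>)
    finally have sM: "sorted_list_of_multiset M = m # L0" .
    have "length L0 + 1 = size M" using sM len_sl[of M] by simp
    then show ?thesis unfolding sM eq
      apply (simp add: L0_def[symmetric])
      apply (rule insort_dom)
      using mle False m_def assms by (auto simp: L0_def dest: in_diffD)
  qed
qed
lemma size_adm: "size (add_drop_min v M) = size M"
proof -
  have "Min (set_mset (add_mset v M)) \<in># add_mset v M"
    by (metis Min_in empty_iff finite_set_mset insert_not_empty set_mset_add_mset_insert)
  then show ?thesis unfolding add_drop_min_def Let_def
    by (simp add: size_Diff_submset)
qed

lemma set_adm: "set_mset (add_drop_min v M) \<subseteq> insert v (set_mset M)"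
  unfolding add_drop_min_def Let_def
  by (metis in_diffD set_mset_add_mset_insert subsetI)

lemma eB_ge1: "1 \<le> eB n"
  unfolding eB_def by (simp add: one_le_power)

lemma coef_nonneg:
  assumes "\<alpha> \<ge> 0"
  shows "0 \<le> (eB n powr (\<alpha> / real n) - 1) / (eB n powr \<alpha> - 1)"
proof -
  have "1 \<le> eB n powr (\<alpha> / real n)" by (rule ge_one_powr_ge_zero[OF eB_ge1]) (use assms in simp)
  moreover have "1 \<le> eB n powr \<alpha>" by (rule ge_one_powr_ge_zero[OF eB_ge1]) (use assms in simp)
  ultimately show ?thesis by simp
qed

lemma beta_mono:
  fixes M M' :: "real multiset"
  assumes "\<alpha> \<ge> 0" "size M = n" "size M' = n"
    "\<forall>i<n. sorted_list_of_multiset M ! i \<le> sorted_list_of_multiset M' ! i"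
  shows "beta_of \<alpha> n M \<le> beta_of \<alpha> n M'"
  unfolding beta_of_def
proof (rule mult_left_mono[OF sum_mono coef_nonneg[OF assms(1)]])
  fix i assume "i \<in> {1..n}"
  then have "i - 1 < n" by auto
  then show "sorted_list_of_multiset M ! (i - 1) * eB n powr (\<alpha> * (real n - real i) / real n)
      \<le> sorted_list_of_multiset M' ! (i - 1) * eB n powr (\<alpha> * (real n - real i) / real n)"
    using assms(4) by (intro mult_right_mono) auto
qed

lemma beta_nonneg:
  fixes M :: "real multiset"
  assumes "\<alpha> \<ge> 0" "size M = n" "\<forall>x\<in>#M. 0 \<le> x"
  shows "0 \<le> beta_of \<alpha> n M"
  unfolding beta_of_def
proof (rule mult_nonneg_nonneg[OF coef_nonneg[OF assms(1)] sum_nonneg])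
  fix i assume "i \<in> {1..n}"
  then have "i - 1 < length (sorted_list_of_multiset M)" using assms(2) len_sl[of M] by auto
  then have "sorted_list_of_multiset M ! (i - 1) \<in># M"
    by (metis nth_mem set_sorted_list_of_multiset)
  then show "0 \<le> sorted_list_of_multiset M ! (i - 1) * eB n powr (\<alpha> * (real n - real i) / real n)"
    using assms(3) by simp
qed

lemma run_step:
  assumes "ea_run \<alpha> k T B w prd asg S" "t \<in> {1..T}"
  shows "S t a = (if a = asg t then add_drop_min (w a t) (S (t - 1) a) else S (t - 1) a)"
  using assms unfolding ea_run_def by blast

lemma if_eq_either: "x = (if b then p else q) \<Longrightarrow> x = p \<or> x = q" by simp

lemma run_choice:
  assumes "ea_run \<alpha> k T B w prd asg S" "t \<in> {1..T}"
  obtains aE where "aE \<le> k" "asg t = (if alphaB \<alpha> (Min (B ` {1..k})) *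
                        (w (prd t) t - beta_of \<alpha> (B (prd t)) (S (t - 1) (prd t)))
                      \<ge> w aE t - beta_of \<alpha> (B aE) (S (t - 1) aE)
                    then prd t else aE)"
  using assms unfolding ea_run_def by blast

lemma run_inv:
  assumes run: "ea_run \<alpha> k T B w prd asg S" and wn: "\<forall>a t. w a t \<ge> 0"
  shows "t \<le> T \<Longrightarrow> size (S t a) = B a \<and> (\<forall>x\<in>#S t a. 0 \<le> x)"
proof (induction t)
  case 0 then show ?case using run unfolding ea_run_def by simp
next
  case (Suc t)
  have st: "S (Suc t) a = (if a = asg (Suc t) then add_drop_min (w a (Suc t)) (S t a) else S t a)"
    using run_step[OF run, of "Suc t" a] Suc.prems by simp
  show ?case
  proof (cases "a = asg (Suc t)")
    case True
    then show ?thesis using st Suc set_adm[of "w a (Suc t)" "S t a"] size_adm wn by auto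
  next
    case False then show ?thesis using st Suc by auto
  qed
qed

lemma run_beta_mono:
  assumes run: "ea_run \<alpha> k T B w prd asg S" and wn: "\<forall>a t. w a t \<ge> 0" and al: "\<alpha> \<ge> 0"
  shows "s \<le> t \<Longrightarrow> t \<le> T \<Longrightarrow> beta_of \<alpha> (B a) (S s a) \<le> beta_of \<alpha> (B a) (S t a)"
proof (induction t)
  case 0 then show ?case by simp
next
  case (Suc t)
  have step: "beta_of \<alpha> (B a) (S t a) \<le> beta_of \<alpha> (B a) (S (Suc t) a)"
  proof -
    have st: "S (Suc t) a = (if a = asg (Suc t) then add_drop_min (w a (Suc t)) (S t a) else S t a)"
      using run_step[OF run, of "Suc t" a] Suc.prems by simp
    have sz: "size (S t a) = B a" using run_inv[OF run wn, of t a] Suc.prems by simp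
    show ?thesis
    proof (cases "a = asg (Suc t)")
      case True
      then show ?thesis using st sz size_adm adm_dom
        by (intro beta_mono[OF al]) auto
    next
      case False then show ?thesis using st by simp
    qed
  qed
  show ?case
  proof (cases "s = Suc t")
    case True then show ?thesis by simp
  next
    case False then show ?thesis using Suc step by (meson le_SucE order_trans Suc_leD)
  qed
qed
theorem lemmaA2:
  fixes \<alpha> :: real and k T :: nat and B :: "nat \<Rightarrow> nat" and w :: "nat \<Rightarrow> nat \<Rightarrow> real"
    and prd asg :: "nat \<Rightarrow> nat" and S :: "nat \<Rightarrow> nat \<Rightarrow> real multiset"
  assumes alpha: "\<alpha> \<ge> 1"
    and k: "k \<ge> 1"
    and budgets: "\<forall>a \<in> {1..k}. B a \<ge> 1"
    and dummy_budget: "B 0 \<ge> T"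
    and w_nonneg: "\<forall>a t. w a t \<ge> 0"
    and w_dummy: "\<forall>t. w 0 t = 0"
    and prd_range: "\<forall>t \<in> {1..T}. prd t \<le> k"
    and prd_feasible: "\<forall>a \<in> {1..k}. card {t \<in> {1..T}. prd t = a} \<le> B a"
    and run: "ea_run \<alpha> k T B w prd asg S"
  shows "(\<Sum>t = 1..T. w (prd t) t) \<le>
    (\<Sum>a = 0..k.
       (real (B a) - real (card ({t \<in> {1..T}. prd t = a} \<inter> {t \<in> {1..T}. asg t = a})))
         * beta_of \<alpha> (B a) (S T a)
       + 1 / alphaB \<alpha> (Min (B ` {1..k})) *
           (\<Sum>t \<in> {t \<in> {1..T}. asg t = a} - {t \<in> {1..T}. prd t = a}.
              w a t - beta_of \<alpha> (B a) (S (t - 1) a))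
       + (\<Sum>t \<in> {t \<in> {1..T}. prd t = a} \<inter> {t \<in> {1..T}. asg t = a}. w a t))"
proof -
  define I where "I = {1..T}"
  define P where "P a = {t \<in> {1..T}. prd t = a}" for a
  define X where "X a = {t \<in> {1..T}. asg t = a}" for a
  define \<beta> where "\<beta> a t = beta_of \<alpha> (B a) (S t a)" for a t
  define c where "c = alphaB \<alpha> (Min (B ` {1..k}))"
  define h where "h a t = w a t - \<beta> a (t - 1)" for a t
  define A where "A = {t \<in> I. asg t = prd t}"
  define N where "N = {t \<in> I. asg t \<noteq> prd t}"
  have al0: "\<alpha> \<ge> 0" using alpha by simp
  have finI: "finite I" and finA: "finite A" and finN: "finite N"
    by (auto simp: I_def A_def N_def)
  have prd_r: "prd t \<le> k" if "t \<in> I" for t using prd_range that I_def by auto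
  have asg_range: "asg t \<le> k" if "t \<in> I" for t
  proof -
    have tI: "t \<in> {1..T}" using that unfolding I_def .
    obtain aE where "aE \<le> k" "asg t = (if alphaB \<alpha> (Min (B ` {1..k})) *
                        (w (prd t) t - beta_of \<alpha> (B (prd t)) (S (t - 1) (prd t)))
                      \<ge> w aE t - beta_of \<alpha> (B aE) (S (t - 1) aE)
                    then prd t else aE)"
      by (rule run_choice[OF run tI])
    then have "asg t = prd t \<or> asg t = aE" by (metis if_eq_either)
    then show ?thesis using prd_r[OF that] \<open>aE \<le> k\<close> by auto
  qed
  have cpos: "c > 0"
  proof -
    define n where "n = Min (B ` {1..k})"
    have "n \<in> B ` {1..k}" unfolding n_def using k by (intro Min_in) auto
    then have n1: "n \<ge> 1" using budgets by auto
    have "1 < eB n" unfolding eB_def using n1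
      by (intro one_less_power) (auto simp: field_simps)
    then have "1 < eB n powr (\<alpha> / real n)" using n1 alpha by (intro gr_one_powr) auto
    then show ?thesis unfolding c_def alphaB_def n_def[symmetric] using n1 by simp
  qed
  have key: "w (prd t) t \<le> \<beta> (prd t) T + 1 / c * h (asg t) t" if "t \<in> N" for t
  proof -
    have tI: "t \<in> {1..T}" and ne: "asg t \<noteq> prd t" using that by (auto simp: N_def I_def)
    obtain aE where "aE \<le> k" "asg t = (if alphaB \<alpha> (Min (B ` {1..k})) *
                        (w (prd t) t - beta_of \<alpha> (B (prd t)) (S (t - 1) (prd t)))
                      \<ge> w aE t - beta_of \<alpha> (B aE) (S (t - 1) aE)
                    then prd t else aE)"
      by (rule run_choice[OF run tI])
    then have aE: "asg t = (if c * (w (prd t) t - \<beta> (prd t) (t - 1))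
                        \<ge> w aE t - \<beta> aE (t - 1) then prd t else aE)"
      unfolding c_def \<beta>_def by simp
    then have "asg t = aE" and lt: "c * (w (prd t) t - \<beta> (prd t) (t - 1)) < w aE t - \<beta> aE (t - 1)"
      using ne by (auto split: if_splits)
    then have lt2: "c * (w (prd t) t - \<beta> (prd t) (t - 1)) < h (asg t) t" by (simp add: h_def)
    have "w (prd t) t - \<beta> (prd t) (t - 1) \<le> 1 / c * h (asg t) t"
      using lt2 cpos by (simp add: field_simps)
    moreover have "\<beta> (prd t) (t - 1) \<le> \<beta> (prd t) T"
      unfolding \<beta>_def using run_beta_mono[OF run w_nonneg al0] tI by auto
    ultimately show ?thesis by linarith
  qed
  have bnn: "0 \<le> \<beta> a T" for a
    unfolding \<beta>_def using run_inv[OF run w_nonneg, of T a] by (intro beta_nonneg[OF al0]) auto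
  have split: "(\<Sum>t = 1..T. w (prd t) t) = (\<Sum>t\<in>A. w (prd t) t) + (\<Sum>t\<in>N. w (prd t) t)"
  proof -
    have "{1..T} = A \<union> N" "A \<inter> N = {}" by (auto simp: A_def N_def I_def)
    then show ?thesis using finA finN by (simp add: sum.union_disjoint)
  qed
  have sA: "(\<Sum>t\<in>A. w (prd t) t) = (\<Sum>a = 0..k. \<Sum>t \<in> P a \<inter> X a. w a t)"
  proof -
    have "(\<Sum>t\<in>A. w (prd t) t) = (\<Sum>a = 0..k. \<Sum>t \<in> {t \<in> A. prd t = a}. w (prd t) t)"
      by (rule sum.group[symmetric]) (use finA prd_r in \<open>auto simp: A_def\<close>)
    also have "\<dots> = (\<Sum>a = 0..k. \<Sum>t \<in> P a \<inter> X a. w a t)"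
    proof (rule sum.cong[OF refl])
      fix a
      have "{t \<in> A. prd t = a} = P a \<inter> X a" by (auto simp: A_def P_def X_def I_def)
      then show "(\<Sum>t \<in> {t \<in> A. prd t = a}. w (prd t) t) = (\<Sum>t \<in> P a \<inter> X a. w a t)"
        by (intro sum.cong) auto
    qed
    finally show ?thesis .
  qed
  have sN1: "(\<Sum>t\<in>N. \<beta> (prd t) T) \<le> (\<Sum>a = 0..k. (real (B a) - real (card (P a \<inter> X a))) * \<beta> a T)"
  proof -
    have "(\<Sum>t\<in>N. \<beta> (prd t) T) = (\<Sum>a = 0..k. \<Sum>t \<in> {t \<in> N. prd t = a}. \<beta> (prd t) T)"
      by (rule sum.group[symmetric]) (use finN prd_r in \<open>auto simp: N_def\<close>)
    also have "\<dots> = (\<Sum>a = 0..k. real (card (P a - X a)) * \<beta> a T)"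
    proof (rule sum.cong[OF refl])
      fix a
      have "{t \<in> N. prd t = a} = P a - X a" by (auto simp: N_def P_def X_def I_def)
      moreover have "(\<Sum>t\<in>P a - X a. \<beta> (prd t) T) = (\<Sum>t\<in>P a - X a. \<beta> a T)"
        by (intro sum.cong) (auto simp: P_def)
      ultimately show "(\<Sum>t \<in> {t \<in> N. prd t = a}. \<beta> (prd t) T) = real (card (P a - X a)) * \<beta> a T"
        by simp
    qed
    also have "\<dots> \<le> (\<Sum>a = 0..k. (real (B a) - real (card (P a \<inter> X a))) * \<beta> a T)"
    proof (rule sum_mono)
      fix a assume a: "a \<in> {0..k}"
      have finP: "finite (P a)" by (simp add: P_def)
      have "P a = (P a \<inter> X a) \<union> (P a - X a)" by auto
      then have cP: "card (P a) = card (P a \<inter> X a) + card (P a - X a)"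
        using finP by (metis card_Un_disjoint finite_Diff finite_Int Diff_disjoint Int_Diff_disjoint)
      have "card (P a) \<le> B a"
      proof (cases "a = 0")
        case True
        have "card (P a) \<le> card {1..T}" by (intro card_mono) (auto simp: P_def)
        then show ?thesis using True dummy_budget by simp
      next
        case False then show ?thesis using prd_feasible a by (auto simp: P_def)
      qed
      then have "real (card (P a - X a)) \<le> real (B a) - real (card (P a \<inter> X a))"
        using cP by simp
      then show "real (card (P a - X a)) * \<beta> a T \<le> (real (B a) - real (card (P a \<inter> X a))) * \<beta> a T"
        using bnn by (intro mult_right_mono) auto
    qed
    finally show ?thesis .
  qed
  have sN2: "(\<Sum>t\<in>N. h (asg t) t) = (\<Sum>a = 0..k. \<Sum>t \<in> X a - P a. h a t)"
  proof -
    have "(\<Sum>t\<in>N. h (asg t) t) = (\<Sum>a = 0..k. \<Sum>t \<in> {t \<in> N. asg t = a}. h (asg t) t)"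
      by (rule sum.group[symmetric]) (use finN asg_range in \<open>auto simp: N_def\<close>)
    also have "\<dots> = (\<Sum>a = 0..k. \<Sum>t \<in> X a - P a. h a t)"
    proof (rule sum.cong[OF refl])
      fix a
      have "{t \<in> N. asg t = a} = X a - P a" by (auto simp: N_def P_def X_def I_def)
      then show "(\<Sum>t \<in> {t \<in> N. asg t = a}. h (asg t) t) = (\<Sum>t \<in> X a - P a. h a t)"
        by (intro sum.cong) auto
    qed
    finally show ?thesis .
  qed
  have sN: "(\<Sum>t\<in>N. w (prd t) t) \<le> (\<Sum>t\<in>N. \<beta> (prd t) T) + 1 / c * (\<Sum>t\<in>N. h (asg t) t)"
  proof -
    have "(\<Sum>t\<in>N. w (prd t) t) \<le> (\<Sum>t\<in>N. \<beta> (prd t) T + 1 / c * h (asg t) t)"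
      using key by (rule sum_mono)
    also have "\<dots> = (\<Sum>t\<in>N. \<beta> (prd t) T) + 1 / c * (\<Sum>t\<in>N. h (asg t) t)"
      by (simp add: sum.distrib sum_distrib_left)
    finally show ?thesis .
  qed
  have "(\<Sum>t = 1..T. w (prd t) t) \<le>
    (\<Sum>a = 0..k. (real (B a) - real (card (P a \<inter> X a))) * \<beta> a T)
    + 1 / c * (\<Sum>a = 0..k. \<Sum>t \<in> X a - P a. h a t)
    + (\<Sum>a = 0..k. \<Sum>t \<in> P a \<inter> X a. w a t)"
    using split sA sN sN1 arg_cong[OF sN2, of "\<lambda>x. 1 / c * x"] by linarith
  also have "\<dots> = (\<Sum>a = 0..k. (real (B a) - real (card (P a \<inter> X a))) * \<beta> a T
      + 1 / c * (\<Sum>t \<in> X a - P a. h a t) + (\<Sum>t \<in> P a \<inter> X a. w a t))"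
    by (simp add: sum.distrib sum_distrib_left)
  finally show ?thesis unfolding P_def X_def \<beta>_def c_def h_def .
qed

end
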